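(* Let $a_1>a_2\ge a_3\ge\cdots\ge a_n$ be real numbers in $[a,b]$, $w_1,\dots,w_n$ real weights with $w_1>0$, and $k$ a positive integer such that $\sum_{i=1}^n w_ia_i^j=0$ for all integers $0\le j<k$. Suppose at least one of the following holds: (1) the sequence $w_1,w_2,\dots,w_n$ has at most $k$ sign changes; (2) the sequence of partial sums $w_1,\ w_1+w_2,\ \dots,\ w_1+\cdots+w_n$ has at most $k-1$ sign changes; (3) the sequence whose $m$-th term ($1\le m\le n$) is $\left(\sum_{i=1}^m w_ia_i\right)-\left(\sum_{i=1}^m w_i\right)a_m$ has at most $k-2$ sign changes. Then $\sum_{i=1}^n w_if(a_i)\ge 0$ for every $k$ times differentiable $f:[a,b]\to\mathbb{R}$ with $f^{(k)}\ge 0$.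
   Context: The number of sign changes of a finite real sequence $c_1,\dots,c_N$ is the maximum integer $m$ such that there exist indices $i_1<i_2<\cdots<i_{m+1}$ with $c_{i_l}c_{i_{l+1}}<0$ for $1\le l\le m$ (zero terms are ignored). *)

theory Defs
  imports Complex_Main
begin

text \<open>A finite real sequence c_1,...,c_N is represented by c :: nat => real together with
  its length N (only the values c 1, ..., c N matter).
  alt_chain c N m: there are indices 1 <= i_0 < i_1 < ... < i_m <= N with
  c(i_l) * c(i_(l+1)) < 0 for all l < m.\<close>
definition alt_chain :: "(nat \<Rightarrow> real) \<Rightarrow> nat \<Rightarrow> nat \<Rightarrow> bool" where
  "alt_chain c N m \<longleftrightarrow>
     (\<exists>idx :: nat \<Rightarrow> nat.
        (\<forall>l\<le>m. 1 \<le> idx l \<and> idx l \<le> N) \<and>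
        (\<forall>l<m. idx l < idx (Suc l)) \<and>
        (\<forall>l<m. c (idx l) * c (idx (Suc l)) < 0))"

text \<open>Number of sign changes: the maximal m with alt_chain c N m
  (Sup over nat; the set is finite, bounded by N, and for N = 0 it is empty and Sup = 0).\<close>
definition sign_changes :: "(nat \<Rightarrow> real) \<Rightarrow> nat \<Rightarrow> nat" where
  "sign_changes c N = Sup {m. alt_chain c N m}"

end

theory Submission
  imports Defs "HOL-Analysis.Analysis"
begin


lemma key_sign:
  fixes p u v :: real
  assumes "p * u \<le> 0" "u * v \<le> 0" "u \<noteq> 0"
  shows "(u - p)*(v - u) < 0"
proof -
  have a: "(u - p)*u > 0" using assms by (simp add: algebra_simps power2_eq_square) (smt (verit) mult_pos_pos mult_neg_neg zero_less_mult_iff)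
  have b: "(v - u)*u < 0" using assms by (simp add: algebra_simps) (smt (verit) mult_pos_pos mult_neg_neg zero_less_mult_iff)
  have "((u - p)*(v - u))*(u*u) < 0" using mult_pos_neg[OF a b] by (simp add: algebra_simps)
  moreover have "u*u > 0" using assms by (metis not_real_square_gt_zero)
  ultimately show ?thesis by (simp add: mult_less_0_iff)
qed

lemma prod_transfer:
  fixes x y X Y :: real
  assumes "x*X > 0" "y*Y > 0" "X*Y < 0"
  shows "x*y < 0"
proof -
  have "(x*y)*(X*Y) > 0" using mult_pos_pos[OF assms(1,2)] by (simp add: algebra_simps)
  show ?thesis
  proof (rule ccontr)
    assume "\<not> x*y < 0"
    hence "x*y \<ge> 0" by simp
    hence "(x*y)*(X*Y) \<le> 0" using assms(3) by (simp add: mult_nonneg_nonpos)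
    thus False using \<open>(x*y)*(X*Y) > 0\<close> by simp
  qed
qed

definition Ev :: "(nat \<Rightarrow> real) \<Rightarrow> nat \<Rightarrow> nat \<Rightarrow> real" where
  "Ev e m l = (if l = Suc m then 0 else e l) - (if l = 0 then 0 else e (l - 1))"

lemma sign_step:
  fixes e :: "nat \<Rightarrow> real"
  assumes "m \<ge> 1" "\<forall>l<m. e l * e (Suc l) < 0" "l \<le> m"
  shows "Ev e m l * Ev e m (Suc l) < 0"
proof -
  have u: "e l \<noteq> 0"
  proof (cases "l < m")
    case True then show ?thesis using assms(2) by fastforce
  next
    case False then have "l = Suc (m - 1)" using assms by auto
    then show ?thesis using assms(2)[rule_format, of "m - 1"] assms(1) by (metis diff_less less_numeral_extra(1) mult_zero_right order_less_irrefl zero_less_one le_trans less_le_trans nat_less_le zero_less_iff_neq_zero Suc_le_eq)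
  qed
  have p: "(if l = 0 then 0 else e (l - 1)) * e l \<le> 0"
  proof (cases l)
    case (Suc j) then show ?thesis using assms(2)[rule_format, of j] assms(3) by simp
  qed simp
  have v: "e l * (if Suc l = Suc m then 0 else e (Suc l)) \<le> 0"
    using assms(2)[rule_format, of l] assms(3) by auto
  have "Ev e m l = e l - (if l = 0 then 0 else e (l - 1))" using assms(3) by (simp add: Ev_def)
  moreover have "Ev e m (Suc l) = (if Suc l = Suc m then 0 else e (Suc l)) - e l" by (simp add: Ev_def)
  ultimately show ?thesis using key_sign[OF p v u] by simp
qed

definition fchain :: "(real \<Rightarrow> real) \<Rightarrow> nat \<Rightarrow> bool" where
  "fchain g m \<longleftrightarrow> (\<exists>t::nat\<Rightarrow>real. (\<forall>l<m. t l < t (Suc l)) \<and> (\<forall>l<m. g (t l) * g (t (Suc l)) < 0))"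

lemma Ev_nonzero:
  fixes e :: "nat \<Rightarrow> real"
  assumes "m \<ge> 1" "\<forall>l<m. e l * e (Suc l) < 0" "l \<le> Suc m"
  shows "Ev e m l \<noteq> 0"
proof (cases "l \<le> m")
  case True then show ?thesis using sign_step[OF assms(1,2) True] by auto
next
  case False then have "l = Suc m" using assms(3) by simp
  then show ?thesis using sign_step[OF assms(1,2), of m] by auto
qed

lemma fchain_rolle:
  fixes g h :: "real \<Rightarrow> real"
  assumes ch: "fchain g m" and m1: "m \<ge> 1" and c: "c > 0"
    and der: "\<And>t. (g has_real_derivative (- c * h t)) (at t)"
    and ga: "g \<alpha> = 0" and gb: "g \<beta> = 0"
    and supp: "\<And>t. g t \<noteq> 0 \<Longrightarrow> \<alpha> < t \<and> t < \<beta>"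
  shows "fchain h (Suc m)"
proof -
  obtain t where tinc: "\<forall>l<m. t l < t (Suc l)" and talt: "\<forall>l<m. g (t l) * g (t (Suc l)) < 0"
    using ch unfolding fchain_def by blast
  define e where "e l = g (t l)" for l
  have ealt: "\<forall>l<m. e l * e (Suc l) < 0" using talt by (simp add: e_def)
  define L where "L l = (if l = 0 then \<alpha> else t (l - 1))" for l
  define R where "R l = (if l = Suc m then \<beta> else t l)" for l
  have gnz: "g (t l) \<noteq> 0" if "l \<le> m" for l
  proof (cases "l < m")
    case True then show ?thesis using talt by fastforce
  next
    case False then have "l = Suc (m - 1)" "m - 1 < m" using that m1 by auto
    then show ?thesis using talt by (metis mult_zero_right order_less_irrefl)
  qed
  have diff: "g (R l) - g (L l) = Ev e m l" if "l \<le> Suc m" for l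
    using that ga gb by (auto simp: R_def L_def Ev_def e_def)
  have LR: "L l < R l" if lS: "l \<le> Suc m" for l
  proof -
    consider "l = 0" | "l = Suc m" | "0 < l" "l \<le> m" using lS by (cases "l = 0"; cases "l = Suc m"; auto)
    then show ?thesis
    proof cases
      case 1 then show ?thesis using supp[OF gnz[of 0]] by (simp add: L_def R_def)
    next
      case 2 then show ?thesis using supp[OF gnz[of m]] m1 by (simp add: L_def R_def)
    next
      case 3 then show ?thesis using tinc[rule_format, of "l - 1"] by (simp add: L_def R_def)
    qed
  qed
  have "\<forall>l. \<exists>z. l \<le> Suc m \<longrightarrow> L l < z \<and> z < R l \<and> g (R l) - g (L l) = (R l - L l) * (- c * h z)"
  proof
    fix l show "\<exists>z. l \<le> Suc m \<longrightarrow> L l < z \<and> z < R l \<and> g (R l) - g (L l) = (R l - L l) * (- c * h z)"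
    proof (cases "l \<le> Suc m")
      case True
      from MVT2[OF LR[OF True], of g "\<lambda>z. - c * h z"] der show ?thesis by blast
    qed blast
  qed
  then obtain s where s: "\<And>l. l \<le> Suc m \<Longrightarrow> L l < s l \<and> s l < R l \<and> g (R l) - g (L l) = (R l - L l) * (- c * h (s l))"
    by metis
  have hs: "(- h (s l)) * Ev e m l > 0" if "l \<le> Suc m" for l
  proof -
    have E: "Ev e m l = (R l - L l) * (- c * h (s l))" using s[OF that] diff[OF that] by simp
    have "Ev e m l \<noteq> 0" using Ev_nonzero[OF m1 ealt that] .
    hence "h (s l) \<noteq> 0" using E by auto
    hence "h (s l) * h (s l) > 0" by (metis not_real_square_gt_zero)
    moreover have "(- h (s l)) * Ev e m l = ((R l - L l) * c) * (h (s l) * h (s l))" by (subst E) (simp add: algebra_simps)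
    moreover have "(R l - L l) * c > 0" using LR[OF that] c by simp
    ultimately show ?thesis by simp
  qed
  show ?thesis unfolding fchain_def
  proof (intro exI conjI allI impI)
    fix l assume l: "l < Suc m"
    have "R l = L (Suc l)" using l by (simp add: R_def L_def)
    then show "s l < s (Suc l)" using s[of l] s[of "Suc l"] l by fastforce
    show "h (s l) * h (s (Suc l)) < 0"
      using prod_transfer[OF hs[of l] hs[of "Suc l"] sign_step[OF m1 ealt, of l]] l by simp
  qed
qed

lemma disc_rolle:
  fixes c d \<delta> :: "nat \<Rightarrow> real"
  assumes step: "\<And>j. lo \<le> j \<Longrightarrow> j < hi \<Longrightarrow> c (Suc j) - c j = d j * \<delta> j \<and> \<delta> j \<ge> 0"
    and clo: "c lo = 0" and chi: "c hi = 0"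
    and rng: "\<forall>l\<le>m. lo \<le> idx l \<and> idx l \<le> hi"
    and inc: "\<forall>l<m. idx l < idx (Suc l)"
    and alt: "\<forall>l<m. c (idx l) * c (idx (Suc l)) < 0"
    and m1: "m \<ge> 1"
  shows "\<exists>idx'. (\<forall>l\<le>Suc m. lo \<le> idx' l \<and> idx' l < hi) \<and> (\<forall>l<Suc m. idx' l < idx' (Suc l))
           \<and> (\<forall>l<Suc m. d (idx' l) * d (idx' (Suc l)) < 0)"
proof -
  define e where "e l = c (idx l)" for l
  have ealt: "\<forall>l<m. e l * e (Suc l) < 0" using alt by (simp add: e_def)
  define L where "L l = (if l = 0 then lo else idx (l - 1))" for l
  define R where "R l = (if l = Suc m then hi else idx l)" for l
  have diff: "c (R l) - c (L l) = Ev e m l" if "l \<le> Suc m" for l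
    using that clo chi by (auto simp: R_def L_def Ev_def e_def)
  have LR0: "L l \<le> R l" if lS: "l \<le> Suc m" for l
  proof -
    consider "l = 0" | "l = Suc m" | "0 < l" "l \<le> m" using lS by (cases "l = 0"; cases "l = Suc m"; auto)
    then show ?thesis
    proof cases
      case 1 then show ?thesis using rng by (simp add: L_def R_def)
    next
      case 2 then show ?thesis using rng m1 by (simp add: L_def R_def)
    next
      case 3 then show ?thesis using inc[rule_format, of "l - 1"] by (auto simp: L_def R_def intro: less_imp_le)
    qed
  qed
  have LRb: "lo \<le> L l \<and> R l \<le> hi" if "l \<le> Suc m" for l
    using that rng by (auto simp: L_def R_def)
  have ex: "\<exists>j. L l \<le> j \<and> j < R l \<and> d j * Ev e m l > 0" if l: "l \<le> Suc m" for l
  proof -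
    have jr: "lo \<le> j \<and> j < hi" if "j \<in> {L l..<R l}" for j
      using that LRb[OF l] by auto
    have "(\<Sum>j = L l..<R l. c (Suc j) - c j) = (\<Sum>j = L l..<R l. d j * \<delta> j)"
    proof (rule sum.cong)
      fix j assume "j \<in> {L l..<R l}"
      then show "c (Suc j) - c j = d j * \<delta> j" using jr step by blast
    qed simp
    then have tel: "c (R l) - c (L l) = (\<Sum>j = L l..<R l. d j * \<delta> j)"
      using sum_Suc_diff'[OF LR0[OF l], of c] by simp
    have nz: "Ev e m l \<noteq> 0" using Ev_nonzero[OF m1 ealt l] .
    show ?thesis
    proof (rule ccontr)
      assume "\<not> ?thesis"
      hence "\<forall>j\<in>{L l..<R l}. d j * Ev e m l \<le> 0" by auto
      have hj: "\<forall>j\<in>{L l..<R l}. (d j * \<delta> j) * Ev e m l \<le> 0"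
      proof
        fix j assume jj: "j \<in> {L l..<R l}"
        have "\<delta> j \<ge> 0" using jr[OF jj] step by blast
        moreover have "d j * Ev e m l \<le> 0" using jj \<open>\<forall>j\<in>{L l..<R l}. d j * Ev e m l \<le> 0\<close> by blast
        ultimately have "\<delta> j * (d j * Ev e m l) \<le> 0" by (simp add: mult_nonneg_nonpos)
        thus "(d j * \<delta> j) * Ev e m l \<le> 0" by (simp add: algebra_simps)
      qed
      have "(\<Sum>j = L l..<R l. d j * \<delta> j) * Ev e m l \<le> 0"
        unfolding sum_distrib_right by (intro sum_nonpos) (use hj in blast)
      hence "Ev e m l * Ev e m l \<le> 0" using tel diff[OF l] by simp
      thus False using nz by (metis not_real_square_gt_zero not_le)
    qed
  qed
  then obtain j where j: "\<And>l. l \<le> Suc m \<Longrightarrow> L l \<le> j l \<and> j l < R l \<and> d (j l) * Ev e m l > 0"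
    by metis
  show ?thesis
  proof (intro exI conjI allI impI)
    fix l assume l: "l \<le> Suc m"
    show "lo \<le> j l" using j[OF l] LRb[OF l] by linarith
    show "j l < hi" using j[OF l] LRb[OF l] by linarith
  next
    fix l assume l: "l < Suc m"
    have "R l = L (Suc l)" using l by (simp add: R_def L_def)
    then show "j l < j (Suc l)" using j[of l] j[of "Suc l"] l by fastforce
    show "d (j l) * d (j (Suc l)) < 0"
      using prod_transfer[OF j[of l, THEN conjunct2, THEN conjunct2] j[of "Suc l", THEN conjunct2, THEN conjunct2] sign_step[OF m1 ealt, of l]] l by simp
  qed
qed

lemma alt_chain_bound:
  assumes "alt_chain c N m" shows "m < N"
proof -
  obtain idx where r: "\<forall>l\<le>m. 1 \<le> idx l \<and> idx l \<le> N" and i: "\<forall>l<m. idx l < idx (Suc l)"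
    using assms unfolding alt_chain_def by blast
  have "l \<le> m \<Longrightarrow> idx 0 + l \<le> idx l" for l
    by (induction l) (use i in auto, metis Suc_le_lessD add_Suc_right le_less_trans less_eq_Suc_le)
  then show ?thesis using r[rule_format, of 0] r[rule_format, of m] by fastforce
qed

lemma alt_chain_le_sc:
  assumes "alt_chain c N m" shows "m \<le> sign_changes c N"
  unfolding sign_changes_def
proof (rule cSup_upper)
  show "m \<in> {m. alt_chain c N m}" using assms by simp
  show "bdd_above {m. alt_chain c N m}" using alt_chain_bound
    by (metis bdd_above.unfold less_or_eq_imp_le mem_Collect_eq)
qed



definition Kf :: "nat \<Rightarrow> real \<Rightarrow> real \<Rightarrow> real" where
  "Kf p xx t = (if t \<le> xx then (xx - t) ^ p else 0)"

lemma Kf_deriv: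
  assumes q: "1 \<le> q"
  shows "((\<lambda>t. Kf (Suc q) xx t) has_real_derivative (- real (Suc q) * Kf q xx t)) (at t)"
proof -
  obtain q' where q': "q = Suc q'" using q by (cases q) auto
  consider "t < xx" | "xx < t" | "t = xx" by linarith
  then show ?thesis
  proof cases
    case 1
    have d1: "((\<lambda>t. xx - t) has_real_derivative -1) (at t)"
      by (auto intro!: derivative_eq_intros)
    have "((\<lambda>t. (xx - t) ^ Suc q) has_real_derivative (1 + of_nat q) * (-1 * (xx - t) ^ q)) (at t)"
      by (rule DERIV_power_Suc[OF d1])
    then have der1: "((\<lambda>t. (xx - t) ^ Suc q) has_real_derivative (- real (Suc q) * (xx - t) ^ q)) (at t)"
      by (simp add: algebra_simps)
    have kv: "Kf q xx t = (xx - t)^q" using 1 by (simp add: Kf_def)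
    show ?thesis unfolding kv using der1
    proof (rule has_field_derivative_transform_within_open[where S = "{..<xx}"])
      show "open {..<xx}" by simp
      show "t \<in> {..<xx}" using 1 by simp
      fix s assume "s \<in> {..<xx}" then show "(xx - s) ^ Suc q = Kf (Suc q) xx s" by (simp add: Kf_def)
    qed
  next
    case 2
    have "((\<lambda>t. 0) has_real_derivative (- real (Suc q) * Kf q xx t)) (at t)"
      using 2 by (simp add: Kf_def)
    then show ?thesis
    proof (rule has_field_derivative_transform_within_open[where S = "{xx<..}"])
      show "open {xx<..}" by simp
      show "t \<in> {xx<..}" using 2 by simp
      fix s assume "s \<in> {xx<..}" then show "0 = Kf (Suc q) xx s" by (simp add: Kf_def)
    qed
  next
    case 3
    have val: "- real (Suc q) * Kf q xx t = 0" using 3 q by (simp add: Kf_def)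
    have bound: "norm ((Kf (Suc q) xx (t + h) - Kf (Suc q) xx t) / h) \<le> \<bar>h\<bar> ^ q" for h
    proof (cases "h \<le> 0")
      case True
      have "Kf (Suc q) xx (t + h) = (- h) ^ Suc q" using True 3 by (simp add: Kf_def)
      moreover have "Kf (Suc q) xx t = 0" using 3 by (simp add: Kf_def)
      ultimately have "norm ((Kf (Suc q) xx (t + h) - Kf (Suc q) xx t) / h) = \<bar>h\<bar> ^ Suc q / \<bar>h\<bar>"
        by (simp add: abs_divide power_abs)
      also have "\<dots> \<le> \<bar>h\<bar> ^ q" by (cases "h = 0") (auto simp: q)
      finally show ?thesis .
    next
      case False
      then show ?thesis using 3 by (simp add: Kf_def)
    qed
    have lim: "((\<lambda>h. \<bar>h\<bar> ^ q) \<longlongrightarrow> 0) (at (0::real))"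
    proof -
      have tend: "((\<lambda>h. \<bar>h\<bar> ^ q) \<longlongrightarrow> \<bar>0::real\<bar> ^ q) (at (0::real))"
        by (intro tendsto_intros)
      have z: "\<bar>0::real\<bar> ^ q = 0" using q by simp
      show ?thesis using tend[unfolded z] .
    qed
    show ?thesis unfolding DERIV_def val
      by (rule Lim_null_comparison[OF always_eventually lim]) (use bound in blast)
  qed
qed

lemma aff1:
  fixes A B p q y :: real
  assumes "p < q" "p \<le> y" "y \<le> q" "(A - B*p) * (A - B*q) > 0"
  shows "(A - B*y) * (A - B*p) > 0"
proof -
  have id: "(q - p) * ((A - B*y) * (A - B*p)) = (q - y) * ((A - B*p) * (A - B*p)) + (y - p) * ((A - B*q) * (A - B*p))"
    by (simp add: algebra_simps)
  have fp: "(A - B*p) * (A - B*p) > 0" using assms(4) by (metis mult_zero_left not_real_square_gt_zero order_less_irrefl)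
  have t2: "(y - p) * ((A - B*q) * (A - B*p)) \<ge> 0" using assms by (simp add: mult.commute)
  have "(q - y) * ((A - B*p) * (A - B*p)) + (y - p) * ((A - B*q) * (A - B*p)) > 0"
  proof (cases "y = q")
    case True then show ?thesis using assms(1,4) by (simp add: mult.commute)
  next
    case False then have "(q - y) * ((A - B*p) * (A - B*p)) > 0" using assms(3) fp by simp
    then show ?thesis using t2 by linarith
  qed
  then have "(q - p) * ((A - B*y) * (A - B*p)) > 0" using id by simp
  then show ?thesis using assms(1) by (simp add: zero_less_mult_iff)
qed

lemma aff2:
  fixes A B p q y :: real
  assumes "p < y" "y \<le> q" "A - B*y \<noteq> 0" "(A - B*q) * (A - B*y) \<le> 0"
  shows "(A - B*p) * (A - B*y) > 0"
proof -
  have id: "(q - p) * ((A - B*y) * (A - B*y)) = (q - y) * ((A - B*p) * (A - B*y)) + (y - p) * ((A - B*q) * (A - B*y))"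
    by (simp add: algebra_simps)
  have "(A - B*y) * (A - B*y) > 0" using assms(3) by (metis not_real_square_gt_zero)
  hence "(q - p) * ((A - B*y) * (A - B*y)) > 0" using assms(1,2) by simp
  moreover have "(y - p) * ((A - B*q) * (A - B*y)) \<le> 0" using assms by (simp add: mult_nonneg_nonpos)
  ultimately have "(q - y) * ((A - B*p) * (A - B*y)) > 0" using id by linarith
  then show ?thesis using assms by (simp add: zero_less_mult_iff)
qed

lemma two_point_chain:
  assumes "g u < 0" "g v > 0" shows "fchain g 1"
proof (cases "u < v")
  case True
  show ?thesis unfolding fchain_def
    by (rule exI[of _ "\<lambda>l. if l = 0 then u else v"]) (use True assms in \<open>auto simp: mult_neg_pos\<close>)
next
  case False
  then have "v < u" using assms by (metis linorder_neqE_linordered_idom order_less_asym)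
  show ?thesis unfolding fchain_def
    by (rule exI[of _ "\<lambda>l. if l = 0 then v else u"]) (use \<open>v < u\<close> assms in \<open>auto simp: mult_pos_neg\<close>)
qed



locale setup5 =
  fixes n k :: nat and x w :: "nat \<Rightarrow> real"
  assumes n2: "n \<ge> 2"
    and strict: "x 1 > x 2"
    and mono: "\<And>i. 2 \<le> i \<Longrightarrow> i < n \<Longrightarrow> x i \<ge> x (Suc i)"
    and w1: "w 1 > 0"
    and kpos: "k \<ge> 1"
    and moments: "\<And>j. j < k \<Longrightarrow> (\<Sum>i=1..n. w i * x i ^ j) = 0"
begin

definition G :: "nat \<Rightarrow> real \<Rightarrow> real" where
  "G p t = (\<Sum>i=1..n. w i * Kf p (x i) t)"

definition W :: "nat \<Rightarrow> real" where
  "W = (\<lambda>m. \<Sum>i=1..m. w i)"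

definition cc :: "nat \<Rightarrow> real" where
  "cc = (\<lambda>m. (\<Sum>i=1..m. w i * x i) - (\<Sum>i=1..m. w i) * x m)"

lemma anti:
  assumes "1 \<le> i" "i \<le> j" "j \<le> n" shows "x j \<le> x i"
  using assms(2,3)
proof (induction j rule: dec_induct)
  case base then show ?case by simp
next
  case (step m)
  have "x (Suc m) \<le> x m"
  proof (cases "m = 1")
    case True then show ?thesis using strict by (simp add: numeral_2_eq_2)
  next
    case False then have "2 \<le> m" using step assms(1) by linarith
    then show ?thesis using mono step by simp
  qed
  then show ?case using step by simp
qed

lemma lt1: assumes "2 \<le> j" "j \<le> n" shows "x j < x 1"
  using anti[of 2 j] assms strict by simp

lemma shifted:
  assumes "j < k" shows "(\<Sum>i=1..n. w i * (x i - t) ^ j) = 0"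
proof -
  have bin: "(x i - t) ^ j = (\<Sum>l\<le>j. of_nat (j choose l) * x i ^ l * (-t) ^ (j - l))" for i
    using binomial_ring[of "x i" "-t" j] by simp
  have "(\<Sum>i=1..n. w i * (x i - t) ^ j) = (\<Sum>i=1..n. \<Sum>l\<le>j. (of_nat (j choose l) * (-t) ^ (j - l)) * (w i * x i ^ l))"
    unfolding bin sum_distrib_left by (intro sum.cong refl) (simp add: algebra_simps)
  also have "\<dots> = (\<Sum>l\<le>j. \<Sum>i=1..n. (of_nat (j choose l) * (-t) ^ (j - l)) * (w i * x i ^ l))"
    by (rule sum.swap)
  also have "\<dots> = (\<Sum>l\<le>j. (of_nat (j choose l) * (-t) ^ (j - l)) * (\<Sum>i=1..n. w i * x i ^ l))"
    by (simp add: sum_distrib_left)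
  also have "\<dots> = 0"
    using assms moments by (intro sum.neutral) auto
  finally show ?thesis .
qed

lemma G_left: assumes "p < k" "t \<le> x n" shows "G p t = 0"
proof -
  have "G p t = (\<Sum>i=1..n. w i * (x i - t) ^ p)"
    unfolding G_def
  proof (intro sum.cong refl)
    fix i assume "i \<in> {1..n}"
    then have "x n \<le> x i" using anti[of i n] by simp
    then show "w i * Kf p (x i) t = w i * (x i - t) ^ p" using assms(2) by (simp add: Kf_def)
  qed
  then show ?thesis using shifted[OF assms(1)] by simp
qed

lemma G_right: assumes "x 1 < t" shows "G p t = 0"
  unfolding G_def
proof (intro sum.neutral ballI)
  fix i assume "i \<in> {1..n}"
  then have "x i \<le> x 1" using anti[of 1 i] by simp
  then show "w i * Kf p (x i) t = 0" using assms by (simp add: Kf_def)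
qed

lemma G_right1: assumes "1 \<le> p" "x 1 \<le> t" shows "G p t = 0"
  unfolding G_def
proof (intro sum.neutral ballI)
  fix i assume "i \<in> {1..n}"
  then have "x i \<le> x 1" using anti[of 1 i] by simp
  then show "w i * Kf p (x i) t = 0" using assms by (auto simp: Kf_def)
qed

lemma G_pos: "G p ((x 1 + x 2) / 2) > 0"
proof -
  let ?t = "(x 1 + x 2) / 2"
  have "G p ?t = w 1 * Kf p (x 1) ?t + (\<Sum>i=Suc 1..n. w i * Kf p (x i) ?t)"
    unfolding G_def using n2 by (subst sum.atLeast_Suc_atMost) auto
  also have "(\<Sum>i=Suc 1..n. w i * Kf p (x i) ?t) = 0"
  proof (intro sum.neutral ballI)
    fix i assume "i \<in> {Suc 1..n}"
    then have "x i \<le> x 2" using anti[of 2 i] by simp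
    then show "w i * Kf p (x i) ?t = 0" using strict by (simp add: Kf_def)
  qed
  finally show ?thesis using w1 strict by (simp add: Kf_def)
qed

lemma G_deriv: assumes "1 \<le> q" shows "(G (Suc q) has_real_derivative (- real (Suc q) * G q t)) (at t)"
proof -
  have "((\<lambda>t. \<Sum>i=1..n. w i * Kf (Suc q) (x i) t) has_real_derivative
          (\<Sum>i=1..n. w i * (- real (Suc q) * Kf q (x i) t))) (at t)"
    by (intro DERIV_sum DERIV_cmult Kf_deriv assms)
  moreover have "(\<Sum>i=1..n. w i * (- real (Suc q) * Kf q (x i) t)) = - real (Suc q) * G q t"
    unfolding G_def sum_distrib_left by (intro sum.cong refl) (simp add: algebra_simps)
  ultimately show ?thesis unfolding G_def[abs_def] by simp
qed

lemma piece:
  assumes "x n < t" "t \<le> x 1"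
  shows "\<exists>m. 1 \<le> m \<and> m < n \<and> (\<forall>i\<in>{1..n}. t \<le> x i \<longleftrightarrow> i \<le> m)"
proof -
  define S where "S = {i \<in> {1..n}. t \<le> x i}"
  have fin: "finite S" by (simp add: S_def)
  have one: "1 \<in> S" using assms n2 by (simp add: S_def)
  define m where "m = Max S"
  have mS: "m \<in> S" unfolding m_def using fin one by (intro Max_in) auto
  have ge: "i \<in> S \<Longrightarrow> i \<le> m" for i using fin by (simp add: m_def)
  have m1: "1 \<le> m" using ge[OF one] .
  have mn: "m < n" using mS assms(1) by (auto simp: S_def) (metis le_neq_implies_less not_le)
  have iff: "\<forall>i\<in>{1..n}. t \<le> x i \<longleftrightarrow> i \<le> m"
  proof
    fix i assume i: "i \<in> {1..n}"
    show "t \<le> x i \<longleftrightarrow> i \<le> m"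
    proof
      assume "t \<le> x i" then show "i \<le> m" using ge i by (simp add: S_def)
    next
      assume "i \<le> m" then have "x m \<le> x i" using anti[of i m] i mn by simp
      moreover have "t \<le> x m" using mS by (simp add: S_def)
      ultimately show "t \<le> x i" by simp
    qed
  qed
  show ?thesis using m1 mn iff by blast
qed

lemma G_piece:
  assumes "\<forall>i\<in>{1..n}. t \<le> x i \<longleftrightarrow> i \<le> m" "m \<le> n"
  shows "G p t = (\<Sum>i=1..m. w i * (x i - t) ^ p)"
  unfolding G_def
proof (rule sum.mono_neutral_cong_right)
  show "finite {1..n}" by simp
  show "{1..m} \<subseteq> {1..n}" using assms(2) by auto
  show "\<forall>i\<in>{1..n} - {1..m}. w i * Kf p (x i) t = 0" using assms(1) by (auto simp: Kf_def)
  fix i assume "i \<in> {1..m}" then show "w i * Kf p (x i) t = w i * (x i - t) ^ p"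
    using assms by (auto simp: Kf_def)
qed

lemma G0_eq: assumes "\<forall>i\<in>{1..n}. t \<le> x i \<longleftrightarrow> i \<le> m" "m \<le> n" shows "G 0 t = W m"
  using G_piece[OF assms, of 0] by (simp add: W_def)

lemma G1_eq: assumes "\<forall>i\<in>{1..n}. t \<le> x i \<longleftrightarrow> i \<le> m" "m \<le> n"
  shows "G 1 t = (\<Sum>i=1..m. w i * x i) - W m * t"
  using G_piece[OF assms, of 1] by (simp add: W_def algebra_simps sum_subtractf sum_distrib_right sum_distrib_left)

lemma cc_eq: "cc m = (\<Sum>i=1..m. w i * x i) - W m * x m"
  by (simp add: cc_def W_def)

lemma cc_Suc_eq: "cc (Suc m) = (\<Sum>i=1..m. w i * x i) - W m * x (Suc m)"
  by (simp add: cc_def W_def algebra_simps)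

lemma chain0:
  assumes ch: "fchain (G 0) r" and r1: "1 \<le> r"
  shows "alt_chain W n r"
proof -
  obtain t where tinc: "\<forall>l<r. t l < t (Suc l)" and talt: "\<forall>l<r. G 0 (t l) * G 0 (t (Suc l)) < 0"
    using ch unfolding fchain_def by blast
  have gnz: "G 0 (t l) \<noteq> 0" if "l \<le> r" for l
  proof (cases "l < r")
    case True then show ?thesis using talt by fastforce
  next
    case False then have "l = Suc (r - 1)" "r - 1 < r" using that r1 by auto
    then show ?thesis using talt by (metis mult_zero_right order_less_irrefl)
  qed
  have "\<forall>l. \<exists>m. l \<le> r \<longrightarrow> 1 \<le> m \<and> m < n \<and> (\<forall>i\<in>{1..n}. t l \<le> x i \<longleftrightarrow> i \<le> m)"
  proof
    fix l show "\<exists>m. l \<le> r \<longrightarrow> 1 \<le> m \<and> m < n \<and> (\<forall>i\<in>{1..n}. t l \<le> x i \<longleftrightarrow> i \<le> m)"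
    proof (cases "l \<le> r")
      case True
      have "x n < t l" using G_left[of 0 "t l"] kpos gnz[OF True] by fastforce
      moreover have "t l \<le> x 1" using G_right[of "t l" 0] gnz[OF True] by fastforce
      ultimately show ?thesis using piece by blast
    qed blast
  qed
  then obtain M where M: "\<And>l. l \<le> r \<Longrightarrow> 1 \<le> M l \<and> M l < n \<and> (\<forall>i\<in>{1..n}. t l \<le> x i \<longleftrightarrow> i \<le> M l)"
    by metis
  have GM: "G 0 (t l) = W (M l)" if "l \<le> r" for l
    using G0_eq[of "t l" "M l"] M[OF that] by simp
  have dec: "M (Suc l) < M l" if l: "l < r" for l
  proof -
    have "M (Suc l) \<le> M l"
    proof -
      have i: "M (Suc l) \<in> {1..n}" using M[of "Suc l"] l by auto
      have "t (Suc l) \<le> x (M (Suc l))" using M[of "Suc l"] l i by auto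
      then have "t l \<le> x (M (Suc l))" using tinc l by force
      then show ?thesis using M[of l] l i by auto
    qed
    moreover have "M (Suc l) \<noteq> M l"
    proof
      assume "M (Suc l) = M l"
      then have "G 0 (t l) * G 0 (t (Suc l)) = W (M l) * W (M l)" using GM[of l] GM[of "Suc l"] l by simp
      then show False using talt l by (metis not_le not_real_square_gt_zero order_less_imp_le zero_le_mult_iff
            le_less_linear less_imp_le)
    qed
    ultimately show ?thesis by simp
  qed
  show ?thesis unfolding alt_chain_def
  proof (intro exI[of _ "\<lambda>l. M (r - l)"] conjI allI impI)
    fix l assume "l \<le> r"
    then show "1 \<le> M (r - l)" "M (r - l) \<le> n" using M[of "r - l"] by auto
  next
    fix l assume l: "l < r"
    then have e: "r - l = Suc (r - Suc l)" "r - Suc l < r" by auto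
    show "M (r - l) < M (r - Suc l)" unfolding e(1) using dec[OF e(2)] .
    show "W (M (r - l)) * W (M (r - Suc l)) < 0"
      using talt[rule_format, OF e(2)] GM[of "r - Suc l"] GM[of "Suc (r - Suc l)"] e
      by (simp add: mult.commute)
  qed
qed

lemma chain1:
  assumes ch: "fchain (G 1) r" and r1: "1 \<le> r" and k2: "2 \<le> k"
  shows "alt_chain cc n r"
proof -
  define A where "A m = (\<Sum>i=1..m. w i * x i)" for m
  obtain t where tinc: "\<forall>l<r. t l < t (Suc l)" and talt: "\<forall>l<r. G 1 (t l) * G 1 (t (Suc l)) < 0"
    using ch unfolding fchain_def by blast
  have gnz: "G 1 (t l) \<noteq> 0" if "l \<le> r" for l
  proof (cases "l < r")
    case True then show ?thesis using talt by fastforce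
  next
    case False then have "l = Suc (r - 1)" "r - 1 < r" using that r1 by auto
    then show ?thesis using talt by (metis mult_zero_right order_less_irrefl)
  qed
  have "\<forall>l. \<exists>m. l \<le> r \<longrightarrow> 1 \<le> m \<and> m < n \<and> (\<forall>i\<in>{1..n}. t l \<le> x i \<longleftrightarrow> i \<le> m)"
  proof
    fix l show "\<exists>m. l \<le> r \<longrightarrow> 1 \<le> m \<and> m < n \<and> (\<forall>i\<in>{1..n}. t l \<le> x i \<longleftrightarrow> i \<le> m)"
    proof (cases "l \<le> r")
      case True
      have "x n < t l" using G_left[of 1 "t l"] k2 gnz[OF True] by fastforce
      moreover have "t l \<le> x 1" using G_right[of "t l" 1] gnz[OF True] by fastforce
      ultimately show ?thesis using piece by blast
    qed blast
  qed
  then obtain M where M: "\<And>l. l \<le> r \<Longrightarrow> 1 \<le> M l \<and> M l < n \<and> (\<forall>i\<in>{1..n}. t l \<le> x i \<longleftrightarrow> i \<le> M l)"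
    by metis
  have GM: "G 1 (t l) = A (M l) - W (M l) * t l" if "l \<le> r" for l
    using G1_eq[of "t l" "M l"] M[OF that] by (simp add: A_def)
  have tle: "t l \<le> x (M l)" if "l \<le> r" for l using M[OF that] by auto
  have tgt: "x (Suc (M l)) < t l" if "l \<le> r" for l
  proof -
    have "Suc (M l) \<in> {1..n}" using M[OF that] by auto
    then show ?thesis using M[OF that] by (meson not_le not_less_eq_eq order_refl)
  qed
  have ccM: "cc (M l) = A (M l) - W (M l) * x (M l)" for l by (simp add: cc_eq A_def)
  have ccS: "cc (Suc (M l)) = A (M l) - W (M l) * x (Suc (M l))" for l by (simp add: cc_Suc_eq A_def)
  define \<iota> where "\<iota> l = (if cc (M l) * G 1 (t l) > 0 then M l else Suc (M l))" for l
  have sgn: "cc (\<iota> l) * G 1 (t l) > 0" if l: "l \<le> r" for l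
  proof (cases "cc (M l) * G 1 (t l) > 0")
    case True then show ?thesis by (simp add: \<iota>_def)
  next
    case False
    have "(A (M l) - W (M l) * x (Suc (M l))) * (A (M l) - W (M l) * t l) > 0"
      by (rule aff2[where q = "x (M l)"])
        (use tgt[OF l] tle[OF l] gnz[OF l] GM[OF l] False ccM[of l] in auto)
    then show ?thesis using False GM[OF l] ccS[of l] by (simp add: \<iota>_def)
  qed
  have Mdec: "M (Suc l) \<le> M l" if l: "l < r" for l
  proof -
    have i: "M (Suc l) \<in> {1..n}" using M[of "Suc l"] l by auto
    have "t (Suc l) \<le> x (M (Suc l))" using M[of "Suc l"] l i by auto
    then have "t l \<le> x (M (Suc l))" using tinc l by force
    then show ?thesis using M[of l] l i by auto
  qed
  have dec: "\<iota> (Suc l) < \<iota> l" if l: "l < r" for l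
  proof -
    have ne: "\<iota> (Suc l) \<noteq> \<iota> l"
    proof
      assume eq: "\<iota> (Suc l) = \<iota> l"
      have "cc (\<iota> l) * cc (\<iota> l) < 0"
        using prod_transfer[OF sgn[of l] sgn[of "Suc l"]] talt l eq by simp
      then show False by (metis not_le not_real_square_gt_zero order_less_imp_le mult_zero_left order_less_irrefl)
    qed
    have le: "\<iota> (Suc l) \<le> \<iota> l"
    proof (cases "M (Suc l) < M l")
      case True then show ?thesis by (simp add: \<iota>_def)
    next
      case False
      then have eqM: "M (Suc l) = M l" using Mdec[OF l] by simp
      show ?thesis
      proof (rule ccontr)
        assume "\<not> ?thesis"
        then have c1: "cc (M l) * G 1 (t l) > 0" and c2: "\<iota> (Suc l) = Suc (M l)"
          using eqM by (auto simp: \<iota>_def split: if_splits)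
        have "(A (M l) - W (M l) * t (Suc l)) * (A (M l) - W (M l) * t l) > 0"
        proof (rule aff1[where q = "x (M l)"])
          show "t l < x (M l)" using tinc l tle[of "Suc l"] eqM by force
          show "t l \<le> t (Suc l)" using tinc l by force
          show "t (Suc l) \<le> x (M l)" using tle[of "Suc l"] l eqM by simp
          show "(A (M l) - W (M l) * t l) * (A (M l) - W (M l) * x (M l)) > 0"
            using c1 GM[of l] ccM[of l] l by (simp add: mult.commute)
        qed
        then have "G 1 (t (Suc l)) * G 1 (t l) > 0" using GM[of l] GM[of "Suc l"] eqM l by simp
        then show False using talt[rule_format, OF l] by (simp add: mult.commute)
      qed
    qed
    show ?thesis using ne le by simp
  qed
  have rng: "1 \<le> \<iota> l \<and> \<iota> l \<le> n" if "l \<le> r" for l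
    using M[OF that] by (auto simp: \<iota>_def)
  show ?thesis unfolding alt_chain_def
  proof (intro exI[of _ "\<lambda>l. \<iota> (r - l)"] conjI allI impI)
    fix l assume "l \<le> r"
    then show "1 \<le> \<iota> (r - l)" "\<iota> (r - l) \<le> n" using rng[of "r - l"] by auto
  next
    fix l assume l: "l < r"
    then have e: "r - l = Suc (r - Suc l)" "r - Suc l < r" by auto
    show "\<iota> (r - l) < \<iota> (r - Suc l)" unfolding e(1) using dec[OF e(2)] .
    have "cc (\<iota> (Suc (r - Suc l))) * cc (\<iota> (r - Suc l)) < 0"
      using prod_transfer[OF sgn[of "Suc (r - Suc l)"] sgn[of "r - Suc l"]] talt[rule_format, OF e(2)] e
      by (simp add: mult.commute)
    then show "cc (\<iota> (r - l)) * cc (\<iota> (r - Suc l)) < 0" unfolding e(1) .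
  qed
qed

lemma chainA:
  assumes "1 \<le> p" "p < k" "fchain (G p) r" "1 \<le> r"
  shows "alt_chain cc n (r + p - 1)"
  using assms
proof (induction p arbitrary: r)
  case 0 then show ?case by simp
next
  case (Suc p)
  show ?case
  proof (cases "p = 0")
    case True then show ?thesis using chain1[of r] Suc.prems by simp
  next
    case False
    then have p1: "1 \<le> p" by simp
    have "fchain (G p) (Suc r)"
    proof (rule fchain_rolle[where c = "real (Suc p)" and \<alpha> = "x n" and \<beta> = "x 1"])
      show "fchain (G (Suc p)) r" by (rule Suc.prems(3))
      show "1 \<le> r" by (rule Suc.prems(4))
      show "real (Suc p) > 0" by simp
      fix t show "(G (Suc p) has_real_derivative - real (Suc p) * G p t) (at t)" by (rule G_deriv[OF p1])
    next
      show "G (Suc p) (x n) = 0" using G_left Suc.prems by simp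
      show "G (Suc p) (x 1) = 0" using G_right1 by simp
      fix t assume nz: "G (Suc p) t \<noteq> 0"
      show "x n < t \<and> t < x 1"
        using G_left[of "Suc p" t] G_right1[of "Suc p" t] Suc.prems nz by force
    qed
    then have "alt_chain cc n (Suc r + p - 1)" using Suc.IH[of "Suc r"] p1 Suc.prems by simp
    then show ?thesis by simp
  qed
qed

lemma ccW:
  assumes k2: "2 \<le> k" and ch: "alt_chain cc n m" and m1: "1 \<le> m"
  shows "alt_chain W n (Suc m)"
proof -
  obtain idx where r: "\<forall>l\<le>m. 1 \<le> idx l \<and> idx l \<le> n" and i: "\<forall>l<m. idx l < idx (Suc l)"
    and a: "\<forall>l<m. cc (idx l) * cc (idx (Suc l)) < 0"
    using ch unfolding alt_chain_def by blast
  have step: "cc (Suc j) - cc j = W j * (x j - x (Suc j)) \<and> x j - x (Suc j) \<ge> 0" if "1 \<le> j" "j < n" for j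
    using anti[of j "Suc j"] that by (simp add: cc_Suc_eq[of j] cc_eq[of j] algebra_simps)
  have c1: "cc 1 = 0" by (simp add: cc_def)
  have cn: "cc n = 0" using moments[of 0] moments[of 1] k2 by (simp add: cc_def)
  obtain idx' where r': "\<forall>l\<le>Suc m. 1 \<le> idx' l \<and> idx' l < n" and i': "\<forall>l<Suc m. idx' l < idx' (Suc l)"
    and a': "\<forall>l<Suc m. W (idx' l) * W (idx' (Suc l)) < 0"
    using disc_rolle[of 1 n cc W "\<lambda>j. x j - x (Suc j)", OF step c1 cn r i a m1] by blast
  show ?thesis unfolding alt_chain_def
    by (rule exI[of _ idx']) (use r' i' a' in \<open>auto simp: less_imp_le\<close>)
qed

lemma Ww:
  assumes ch: "alt_chain W n m" and m1: "1 \<le> m"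
  shows "alt_chain w n (Suc m)"
proof -
  obtain idx where r: "\<forall>l\<le>m. 1 \<le> idx l \<and> idx l \<le> n" and i: "\<forall>l<m. idx l < idx (Suc l)"
    and a: "\<forall>l<m. W (idx l) * W (idx (Suc l)) < 0"
    using ch unfolding alt_chain_def by blast
  have step: "W (Suc j) - W j = w (Suc j) * 1 \<and> (1::real) \<ge> 0" if "0 \<le> j" "j < n" for j
    by (simp add: W_def)
  have c0: "W 0 = 0" by (simp add: W_def)
  have cn: "W n = 0" using moments[of 0] kpos by (simp add: W_def)
  have r0: "\<forall>l\<le>m. 0 \<le> idx l \<and> idx l \<le> n" using r by auto
  obtain idx' where r': "\<forall>l\<le>Suc m. 0 \<le> idx' l \<and> idx' l < n" and i': "\<forall>l<Suc m. idx' l < idx' (Suc l)"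
    and a': "\<forall>l<Suc m. w (Suc (idx' l)) * w (Suc (idx' (Suc l))) < 0"
    using disc_rolle[of 0 n W "\<lambda>j. w (Suc j)" "\<lambda>j. 1", OF step c0 cn r0 i a m1] by blast
  show ?thesis unfolding alt_chain_def
    by (rule exI[of _ "\<lambda>l. Suc (idx' l)"]) (use r' i' a' in \<open>auto simp: Suc_le_eq\<close>)
qed

lemma Gk_nonneg:
  assumes cond: "sign_changes w n \<le> k \<or> sign_changes W n \<le> k - 1 \<or> int (sign_changes cc n) \<le> int k - 2"
  shows "G (k - 1) t \<ge> 0"
proof (rule ccontr)
  assume "\<not> G (k - 1) t \<ge> 0"
  then have "G (k - 1) t < 0" by simp
  then have fc: "fchain (G (k - 1)) 1" by (rule two_point_chain[of "G (k - 1)" t "(x 1 + x 2) / 2", OF _ G_pos])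
  show False
  proof (cases "k = 1")
    case True
    have aW: "alt_chain W n 1" using chain0[of 1] fc True by simp
    have aw: "alt_chain w n 2" using Ww[OF aW] by (simp add: numeral_2_eq_2)
    show False using alt_chain_le_sc[OF aW] alt_chain_le_sc[OF aw] cond True by auto
  next
    case False
    then have k2: "2 \<le> k" using kpos by simp
    have acc: "alt_chain cc n (k - 1)" using chainA[of "k - 1" 1] fc k2 by simp
    have aW: "alt_chain W n k" using ccW[OF k2 acc] k2 by simp
    have aw: "alt_chain w n (Suc k)" using Ww[OF aW] k2 by simp
    show False using alt_chain_le_sc[OF aW] alt_chain_le_sc[OF aw] alt_chain_le_sc[OF acc] cond k2 by auto
  qed
qed

end


theorem mainTheorem5:
  fixes a b :: real and n k :: nat and x w :: "nat \<Rightarrow> real"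
  assumes n2: "n \<ge> 2"
    and strict: "x 1 > x 2"
    and mono: "\<And>i. 2 \<le> i \<Longrightarrow> i < n \<Longrightarrow> x i \<ge> x (Suc i)"
    and range: "\<And>i. 1 \<le> i \<Longrightarrow> i \<le> n \<Longrightarrow> x i \<in> {a..b}"
    and w1: "w 1 > 0"
    and kpos: "k \<ge> 1"
    and moments: "\<And>j. j < k \<Longrightarrow> (\<Sum>i=1..n. w i * x i ^ j) = 0"
    and cond: "sign_changes w n \<le> k
             \<or> sign_changes (\<lambda>m. \<Sum>i=1..m. w i) n \<le> k - 1
             \<or> int (sign_changes (\<lambda>m. (\<Sum>i=1..m. w i * x i) - (\<Sum>i=1..m. w i) * x m) n)
                 \<le> int k - 2"
    and D0: "D 0 = f"
    and Dderiv: "\<And>j t. j < k \<Longrightarrow> t \<in> {a..b} \<Longrightarrow>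
                   (D j has_real_derivative D (Suc j) t) (at t within {a..b})"
    and Dk: "\<And>t. t \<in> {a..b} \<Longrightarrow> D k t \<ge> 0"
  shows "(\<Sum>i=1..n. w i * f (x i)) \<ge> 0"
proof -
  interpret L: setup5 n k x w
    by unfold_locales (use n2 strict mono w1 kpos moments in auto)
  have Gnn: "L.G (k - 1) t \<ge> 0" for t
    using L.Gk_nonneg[unfolded L.W_def L.cc_def, OF cond] .
  define P where "P i = (\<Sum>j<k. (x i - a) ^ j / fact j * D j a)" for i
  define Ki where "Ki i t = Kf (k - 1) (x i) t / fact (k - 1) * D k t" for i t
  have int_i: "(Ki i has_integral (f (x i) - P i)) {a..b}" if i: "i \<in> {1..n}" for i
  proof -
    have xi: "a \<le> x i" "x i \<le> b" using range[of i] i by auto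
    have der: "(D m has_vector_derivative D (Suc m) t) (at t within {a..x i})"
      if "m < k" "a \<le> t" "t \<le> x i" for m t
    proof -
      have "(D m has_real_derivative D (Suc m) t) (at t within {a..b})"
        using Dderiv[of m t] that xi by simp
      then have "(D m has_real_derivative D (Suc m) t) (at t within {a..x i})"
        by (rule has_field_derivative_subset) (use xi in auto)
      then show ?thesis by (simp add: has_real_derivative_iff_has_vector_derivative)
    qed
    have T: "((\<lambda>t. ((x i - t) ^ (k - 1) / fact (k - 1)) *\<^sub>R D k t) has_integral
              f (x i) - (\<Sum>j<k. ((x i - a) ^ j / fact j) *\<^sub>R D j a)) {a..x i}"
      by (rule Taylor_has_integral[of k D f]) (use kpos D0 der xi in auto)
    have Pe: "(\<Sum>j<k. (x i - a) ^ j / fact j * D j a) = P i" by (simp add: P_def)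
    have T': "((\<lambda>t. (x i - t) ^ (k - 1) / fact (k - 1) * D k t) has_integral (f (x i) - P i)) (cbox a (x i))"
      using T unfolding real_scaleR_def Pe interval_cbox .
    have "((\<lambda>t. if t \<in> cbox a (x i) then (x i - t) ^ (k - 1) / fact (k - 1) * D k t else 0) has_integral (f (x i) - P i)) (cbox a b)"
      by (rule has_integral_restrict_closed_subinterval[OF T']) (use xi in auto)
    then show ?thesis unfolding interval_cbox[symmetric]
      by (rule has_integral_eq[rotated]) (auto simp: Ki_def Kf_def)
  qed
  have "((\<lambda>t. \<Sum>i\<in>{1..n}. w i * Ki i t) has_integral (\<Sum>i\<in>{1..n}. w i * (f (x i) - P i))) {a..b}"
    by (intro has_integral_sum finite_atLeastAtMost has_integral_mult_right int_i)
  moreover have "(\<Sum>i\<in>{1..n}. w i * Ki i t) = L.G (k - 1) t * D k t / fact (k - 1)" for t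
    unfolding L.G_def Ki_def sum_distrib_right sum_divide_distrib by (intro sum.cong refl) (simp add: algebra_simps)
  moreover have "(\<Sum>i\<in>{1..n}. w i * P i) = 0"
  proof -
    have "(\<Sum>i\<in>{1..n}. w i * P i) = (\<Sum>i\<in>{1..n}. \<Sum>j<k. (D j a / fact j) * (w i * (x i - a) ^ j))"
      unfolding P_def sum_distrib_left by (intro sum.cong refl) (simp add: algebra_simps)
    also have "\<dots> = (\<Sum>j<k. \<Sum>i\<in>{1..n}. (D j a / fact j) * (w i * (x i - a) ^ j))"
      by (rule sum.swap)
    also have "\<dots> = (\<Sum>j<k. (D j a / fact j) * (\<Sum>i\<in>{1..n}. w i * (x i - a) ^ j))"
      by (simp add: sum_distrib_left)
    also have "\<dots> = 0" using L.shifted by simp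
    finally show ?thesis .
  qed
  ultimately have I: "((\<lambda>t. L.G (k - 1) t * D k t / fact (k - 1)) has_integral (\<Sum>i\<in>{1..n}. w i * f (x i))) {a..b}"
    by (simp add: right_diff_distrib sum_subtractf)
  show ?thesis
    by (rule has_integral_nonneg[OF I]) (use Gnn Dk in simp)
qed


end
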